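(* There exists a universal constant $K_0$ such that for all positive integers $s$, $$\sum_{0\le k\le s/2}(1+t_k^2)\,p_k\le K_0.$$
   Context: For a positive integer $s$ and integers $0\le k\le s/2$, let $p_k=\binom{s-k}{k}\big/\sum_{0\le j\le s/2}\binom{s-j}{j}$ (so $p_k\ge0$ and $\sum_k p_k=1$; the denominator is the Fibonacci number $Fib_{s+1}$). Let $c_0=(5-\sqrt5)/10$, $k_0=\lfloor c_0 s\rfloor$, and $t_k=5^{3/4}(k-k_0)/\sqrt{s}$. *)

theory Defs
  imports Complex_Main
begin

text \<open>Normalising constant: sum over 0 <= j <= s/2 of binom(s-j, j) (equals Fib(s+1)).\<close>
definition fibnorm :: "nat \<Rightarrow> real" where
  "fibnorm s = (\<Sum>j\<in>{j. 2 * j \<le> s}. real ((s - j) choose j))"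

definition pk :: "nat \<Rightarrow> nat \<Rightarrow> real" where
  "pk s k = real ((s - k) choose k) / fibnorm s"

definition c0 :: real where
  "c0 = (5 - sqrt 5) / 10"

definition k0 :: "nat \<Rightarrow> int" where
  "k0 s = \<lfloor>c0 * real s\<rfloor>"

definition tk :: "nat \<Rightarrow> nat \<Rightarrow> real" where
  "tk s k = 5 powr (3/4) * (real k - real_of_int (k0 s)) / sqrt (real s)"

end

theory Submission
  imports Defs
begin

definition SS :: "nat \<Rightarrow> (nat \<Rightarrow> real) \<Rightarrow> real" where
  "SS s g = (\<Sum>k\<le>s. real ((s - k) choose k) * g k)"

lemma SS_ext:
  assumes "s \<le> n"
  shows "(\<Sum>k\<le>n. real ((s - k) choose k) * g k) = SS s g"
  unfolding SS_def
proof (rule sum.mono_neutral_right)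
  show "finite {..n}" by simp
  show "{..s} \<subseteq> {..n}" using assms by auto
  show "\<forall>i\<in>{..n} - {..s}. real ((s - i) choose i) * g i = 0" by auto
qed

lemma binom_rec: "(Suc (Suc s) - Suc k) choose Suc k = ((Suc s - Suc k) choose Suc k) + ((s - k) choose k)"
proof (cases "k \<le> s")
  case True
  then have "Suc (Suc s) - Suc k = Suc (s - k)" by simp
  then show ?thesis using True by (simp add: binomial_Suc_Suc)
next
  case False
  then show ?thesis by simp
qed

lemma SS_rec: "SS (Suc (Suc s)) g = SS (Suc s) g + SS s (\<lambda>j. g (Suc j))"
proof -
  have "SS (Suc (Suc s)) g = g 0 + (\<Sum>k\<le>Suc s. real ((Suc (Suc s) - Suc k) choose Suc k) * g (Suc k))"
    unfolding SS_def by (subst sum.atMost_Suc_shift) simp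
  also have "\<dots> = g 0 + (\<Sum>k\<le>Suc s. real ((Suc s - Suc k) choose Suc k) * g (Suc k))
      + (\<Sum>k\<le>Suc s. real ((s - k) choose k) * g (Suc k))"
    by (simp only: binom_rec of_nat_add distrib_right sum.distrib add.assoc)
  also have "(\<Sum>k\<le>Suc s. real ((s - k) choose k) * g (Suc k)) = SS s (\<lambda>j. g (Suc j))"
    by (rule SS_ext) simp
  also have "g 0 + (\<Sum>k\<le>Suc s. real ((Suc s - Suc k) choose Suc k) * g (Suc k)) = SS (Suc s) g"
  proof -
    have "SS (Suc s) g = (\<Sum>k\<le>Suc (Suc s). real ((Suc s - k) choose k) * g k)"
      by (rule SS_ext[symmetric]) simp
    also have "\<dots> = g 0 + (\<Sum>k\<le>Suc s. real ((Suc s - Suc k) choose Suc k) * g (Suc k))"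
      by (subst sum.atMost_Suc_shift) simp
    finally show ?thesis by simp
  qed
  finally show ?thesis .
qed

definition T0 where "T0 s = SS s (\<lambda>_. 1)"
definition T1 where "T1 s = SS s (\<lambda>k. real k)"
definition T2 where "T2 s = SS s (\<lambda>k. (real k)^2)"

lemma T0_rec: "T0 (Suc (Suc s)) = T0 (Suc s) + T0 s"
  unfolding T0_def by (simp add: SS_rec)

lemma SS_lin: "SS s (\<lambda>k. a * g k + b * h k) = a * SS s g + b * SS s h"
  unfolding SS_def by (simp add: sum.distrib sum_distrib_left algebra_simps)

lemma T1_rec: "T1 (Suc (Suc s)) = T1 (Suc s) + T1 s + T0 s"
proof -
  have "SS s (\<lambda>j. real (Suc j)) = SS s (\<lambda>k. 1 * real k + 1 * 1)" by (simp add: add.commute)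
  also have "\<dots> = T1 s + T0 s" unfolding T1_def T0_def by (simp only: SS_lin)
  finally have h: "SS s (\<lambda>j. real (Suc j)) = T1 s + T0 s" .
  have "T1 (Suc (Suc s)) = SS (Suc s) real + SS s (\<lambda>j. real (Suc j))"
    unfolding T1_def by (rule SS_rec)
  then show ?thesis using h unfolding T1_def by simp
qed

lemma T2_rec: "T2 (Suc (Suc s)) = T2 (Suc s) + T2 s + 2 * T1 s + T0 s"
proof -
  have "SS s (\<lambda>j. (real (Suc j))^2) = SS s (\<lambda>k. 1 * (real k)^2 + 1 * (2 * real k + 1))"
    by (simp add: power2_eq_square algebra_simps)
  also have "\<dots> = SS s (\<lambda>k. 1 * (real k)^2 + 1 * (2 * real k + 1 * 1))" by simp
  also have "\<dots> = T2 s + 2 * T1 s + T0 s"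
    unfolding T2_def T1_def T0_def by (simp only: SS_lin) simp
  finally have h: "SS s (\<lambda>j. (real (Suc j))^2) = T2 s + 2 * T1 s + T0 s" .
  have "T2 (Suc (Suc s)) = SS (Suc s) (\<lambda>k. (real k)^2) + SS s (\<lambda>j. (real (Suc j))^2)"
    unfolding T2_def by (rule SS_rec)
  then show ?thesis using h unfolding T2_def by simp
qed

lemma T0_01: "T0 0 = 1" "T0 (Suc 0) = 1" unfolding T0_def SS_def by simp_all
lemma T1_01: "T1 0 = 0" "T1 (Suc 0) = 0" unfolding T1_def SS_def by simp_all
lemma T2_01: "T2 0 = 0" "T2 (Suc 0) = 0" unfolding T2_def SS_def by simp_all

lemma sqrt5: "sqrt 5 * sqrt 5 = (5::real)" by simp

lemma c0_bounds: "0 < c0" "c0 < 1/2"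
proof -
  have a: "2 < sqrt (5::real)" by (rule real_less_rsqrt) simp
  have b: "sqrt (5::real) < 3" by (rule real_sqrt_less_mono[of 5 9, simplified]) 
  show "0 < c0" "c0 < 1/2" unfolding c0_def using a b by auto
qed

definition phi :: real where "phi = (1 + sqrt 5) / 2"

lemma phi_sq: "phi * phi = phi + 1"
  unfolding phi_def using sqrt5 by (simp add: field_simps)

lemma c0_phi: "c0 * phi = 1 - 2 * c0"
  unfolding phi_def c0_def using sqrt5 by (simp add: field_simps)

lemma phi_bounds: "1 < phi" "phi < 2"
proof -
  have a: "2 < sqrt (5::real)" by (rule real_less_rsqrt) simp
  have b: "sqrt (5::real) < 3" by (rule real_sqrt_less_mono[of 5 9, simplified])
  show "1 < phi" "phi < 2" unfolding phi_def using a b by auto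
qed

definition EE where "EE s = T0 (Suc s) - phi * T0 s"

lemma EE_bound: "\<bar>EE s\<bar> \<le> 1"
proof (induction s)
  case 0
  then show ?case unfolding EE_def using T0_01 phi_bounds by simp
next
  case (Suc s)
  have "EE (Suc s) = (1 - phi) * EE s"
  proof -
    have "phi * (phi * T0 s) = (phi + 1) * T0 s" using phi_sq by (metis mult.assoc)
    then show ?thesis unfolding EE_def T0_rec by (simp add: algebra_simps)
  qed
  also have "\<bar>\<dots>\<bar> = \<bar>1 - phi\<bar> * \<bar>EE s\<bar>" by (simp add: abs_mult)
  also have "\<dots> \<le> 1 * 1"
    using Suc phi_bounds by (intro mult_mono) auto
  finally show ?case by simp
qed

definition DD where "DD s = T1 s - c0 * real s * T0 s"
definition VV where "VV s = T2 s - 2 * c0 * real s * T1 s + c0^2 * (real s)^2 * T0 s"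

lemma DD_rec: "DD (Suc (Suc s)) = DD (Suc s) + DD s - c0 * EE s"
proof -
  have "DD (Suc (Suc s)) = DD (Suc s) + DD s - c0 * T0 (Suc s) + (1 - 2 * c0) * T0 s"
    unfolding DD_def T1_rec T0_rec by (simp add: algebra_simps)
  then show ?thesis unfolding EE_def c0_phi[symmetric] by (simp add: algebra_simps)
qed

lemma VV_rec: "VV (Suc (Suc s)) = VV (Suc s) + VV s - 2 * c0 * DD (Suc s) + 2 * (1 - 2 * c0) * DD s
   + c0^2 * T0 (Suc s) + (1 - 2 * c0)^2 * T0 s"
  unfolding VV_def DD_def T2_rec T1_rec T0_rec by (simp add: algebra_simps power2_eq_square)

lemma T0_ge1: "1 \<le> T0 s \<and> 1 \<le> T0 (Suc s)"
  by (induction s) (auto simp: T0_01 T0_rec)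

lemma DD_bound: "\<bar>DD s\<bar> \<le> 2 * T0 s - 1 \<and> \<bar>DD (Suc s)\<bar> \<le> 2 * T0 (Suc s) - 1"
proof (induction s)
  case 0
  then show ?case unfolding DD_def using T0_01 T1_01 c0_bounds by simp
next
  case (Suc s)
  have e: "\<bar>c0 * EE s\<bar> \<le> 1"
    using EE_bound[of s] c0_bounds by (simp add: abs_mult mult_le_one)
  have "\<bar>DD (Suc (Suc s))\<bar> \<le> \<bar>DD (Suc s)\<bar> + \<bar>DD s\<bar> + \<bar>c0 * EE s\<bar>"
    unfolding DD_rec by linarith
  also have "\<dots> \<le> 2 * T0 (Suc (Suc s)) - 1" using Suc.IH e unfolding T0_rec by (simp only: conj_imp_eq_imp_imp distrib_left)
  finally show ?case using Suc by simp
qed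

lemma VV_bound: "VV s \<le> 3 * (real s + 1) * T0 s \<and> VV (Suc s) \<le> 3 * (real (Suc s) + 1) * T0 (Suc s)"
proof (induction s)
  case 0
  have "c0^2 \<le> 1" using c0_bounds by (simp add: power_le_one)
  then show ?case unfolding VV_def using T0_01 T1_01 T2_01 by simp
next
  case (Suc s)
  have t0: "1 \<le> T0 s" "1 \<le> T0 (Suc s)" using T0_ge1[of s] by auto
  have d1: "- 2 * c0 * DD (Suc s) \<le> 2 * T0 (Suc s)"
  proof -
    have "- 2 * c0 * DD (Suc s) \<le> \<bar>2 * c0\<bar> * \<bar>DD (Suc s)\<bar>"
      by (metis abs_ge_minus_self abs_mult mult_minus_left)
    also have "\<dots> \<le> 1 * (2 * T0 (Suc s))"
      using c0_bounds DD_bound[of "Suc s"] by (intro mult_mono) auto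
    finally show ?thesis by simp
  qed
  have d2: "2 * (1 - 2 * c0) * DD s \<le> 4 * T0 s"
  proof -
    have "2 * (1 - 2 * c0) * DD s \<le> \<bar>2 * (1 - 2 * c0)\<bar> * \<bar>DD s\<bar>"
      by (metis abs_ge_self abs_mult)
    also have "\<dots> \<le> 2 * (2 * T0 s)"
      using c0_bounds DD_bound[of s] by (intro mult_mono) auto
    finally show ?thesis by simp
  qed
  have d3: "c0^2 * T0 (Suc s) \<le> T0 (Suc s)"
    using c0_bounds t0 by (simp add: mult_left_le_one_le power_le_one)
  have d4: "(1 - 2 * c0)^2 * T0 s \<le> T0 s"
    using c0_bounds t0 by (simp add: mult_left_le_one_le power_le_one)
  have "VV (Suc (Suc s)) \<le> 3 * (real (Suc s) + 1) * T0 (Suc s) + 3 * (real s + 1) * T0 s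
      + 3 * T0 (Suc s) + 5 * T0 s"
    unfolding VV_rec using Suc d1 d2 d3 d4 by linarith
  also have "\<dots> \<le> 3 * (real (Suc (Suc s)) + 1) * T0 (Suc (Suc s))"
    unfolding T0_rec using t0 by (simp add: algebra_simps)
  finally show ?case using Suc by simp
qed

lemma SS_A: "(\<Sum>k\<in>{k. 2 * k \<le> s}. real ((s - k) choose k) * h k) = SS s h"
  unfolding SS_def
proof (rule sum.mono_neutral_left)
  show "finite {..s}" by simp
  show "{k. 2 * k \<le> s} \<subseteq> {..s}" by auto
  show "\<forall>i\<in>{..s} - {k. 2 * k \<le> s}. real ((s - i) choose i) * h i = 0" by auto
qed

lemma fibnorm_T0: "fibnorm s = T0 s"
  using SS_A[of s "\<lambda>_. 1"] unfolding fibnorm_def T0_def by simp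

lemma VV_SS: "VV s = SS s (\<lambda>k. (real k - c0 * real s)^2)"
proof -
  have "SS s (\<lambda>k. (real k - c0 * real s)^2) =
        SS s (\<lambda>k. 1 * (real k)^2 + 1 * ((- 2 * c0 * real s) * real k + (c0^2 * (real s)^2) * 1))"
    by (simp add: power2_eq_square algebra_simps)
  also have "\<dots> = VV s" unfolding VV_def T2_def T1_def T0_def by (simp only: SS_lin) simp
  finally show ?thesis by simp
qed

theorem lemma6:
  shows "\<exists>K0::real. \<forall>s::nat. s > 0 \<longrightarrow>
           (\<Sum>k\<in>{k. 2 * k \<le> s}. (1 + (tk s k)^2) * pk s k) \<le> K0"
proof
  define P :: real where "P = (5 powr (3/4))^2"
  have P0: "0 \<le> P" unfolding P_def by simp
  show "\<forall>s::nat. s > 0 \<longrightarrow>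
           (\<Sum>k\<in>{k. 2 * k \<le> s}. (1 + (tk s k)^2) * pk s k) \<le> 1 + 14 * P"
  proof (intro allI impI)
    fix s :: nat assume sp: "s > 0"
    have T0p: "T0 s \<ge> 1" using T0_ge1[of s] by simp
    let ?g = "\<lambda>k. 1 + P / real s * (2 * (real k - c0 * real s)^2 + 2)"
    have pt: "(1 + (tk s k)^2) \<le> ?g k" for k
    proof -
      have "(tk s k)^2 = P * (real k - real_of_int (k0 s))^2 / real s"
        unfolding tk_def P_def using sp by (simp add: power_divide power_mult_distrib)
      moreover have "(real k - real_of_int (k0 s))^2 \<le> 2 * (real k - c0 * real s)^2 + 2"
      proof -
        have f1: "real_of_int (k0 s) \<le> c0 * real s" "c0 * real s < real_of_int (k0 s) + 1"
          unfolding k0_def by linarith+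
        define a where "a = real k - c0 * real s"
        define b where "b = c0 * real s - real_of_int (k0 s)"
        have "b * b \<le> 1" using f1 unfolding b_def by (intro mult_le_one) auto
        moreover have "0 \<le> (a - b)^2" by simp
        moreover have "real k - real_of_int (k0 s) = a + b" unfolding a_def b_def by simp
        ultimately show ?thesis unfolding a_def[symmetric]
          by (simp add: power2_eq_square algebra_simps)
      qed
      ultimately have "(tk s k)^2 \<le> P * (2 * (real k - c0 * real s)^2 + 2) / real s"
        using P0 sp by (simp add: divide_right_mono mult_left_mono)
      then show ?thesis by simp
    qed
    have "(\<Sum>k\<in>{k. 2 * k \<le> s}. (1 + (tk s k)^2) * pk s k)
          \<le> (\<Sum>k\<in>{k. 2 * k \<le> s}. ?g k * pk s k)"
    proof (rule sum_mono)
      fix k assume "k \<in> {k. 2 * k \<le> s}"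
      have "0 \<le> pk s k" unfolding pk_def fibnorm_T0 using T0p by simp
      then show "(1 + (tk s k)^2) * pk s k \<le> ?g k * pk s k" by (rule mult_right_mono[OF pt])
    qed
    also have "(\<Sum>k\<in>{k. 2 * k \<le> s}. ?g k * pk s k)
        = (\<Sum>k\<in>{k. 2 * k \<le> s}. real ((s - k) choose k) * ?g k) / T0 s"
      unfolding pk_def fibnorm_T0 by (simp add: sum_divide_distrib mult.commute)
    also have "\<dots> = SS s ?g / T0 s" by (simp only: SS_A)
    also have "SS s ?g = (1 + 2 * P / real s) * T0 s + (2 * P / real s) * VV s"
    proof -
      have "SS s ?g = SS s (\<lambda>k. (1 + 2 * P / real s) * 1 + (2 * P / real s) * (real k - c0 * real s)^2)"
        by (simp add: algebra_simps)
      then show ?thesis unfolding VV_SS T0_def by (simp only: SS_lin)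
    qed
    also have "((1 + 2 * P / real s) * T0 s + (2 * P / real s) * VV s) / T0 s
        = (1 + 2 * P / real s) + (2 * P / real s) * (VV s / T0 s)"
      using T0p by (simp add: field_simps)
    also have "\<dots> \<le> 1 + 14 * P"
    proof -
      have "VV s / T0 s \<le> 3 * (real s + 1)" using VV_bound[of s] T0p
        by (simp add: divide_le_eq)
      then have "(2 * P / real s) * (VV s / T0 s) \<le> (2 * P / real s) * (3 * (real s + 1))"
        using P0 sp by (intro mult_left_mono) auto
      also have "\<dots> = 6 * P + 6 * P / real s" using sp by (simp add: field_simps)
      also have "\<dots> \<le> 12 * P"
      proof -
        have "P * 1 \<le> P * real s" using sp P0 by (intro mult_left_mono) auto
        then show ?thesis using sp P0 by (simp add: divide_le_eq)
      qed
      finally have a: "(2 * P / real s) * (VV s / T0 s) \<le> 12 * P" .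
      have "P * 1 \<le> P * real s" using sp P0 by (intro mult_left_mono) auto
      then have "2 * P / real s \<le> 2 * P" using sp P0 by (simp add: divide_le_eq)
      then show ?thesis using a by linarith
    qed
    finally show "(\<Sum>k\<in>{k. 2 * k \<le> s}. (1 + (tk s k)^2) * pk s k) \<le> 1 + 14 * P" .
  qed
qed

end
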